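(* Suppose $m$ hypotheses are tested by the Benjamini–Hochberg procedure at nominal level $\alpha$ under conditions ensuring that its global FDR satisfies $\mathbb{E}\big[V/\max\{1,R\}\big]\le\alpha$. Then for any partition of the hypotheses into classes $1,\dots,K$, the Benjamini–Hochberg procedure satisfies $$\mathbb{E}\left[\frac{\sum_{k=1}^KV_k}{\sum_{k=1}^K\max\{1,R_k\}}\right]\le\alpha .$$
   Context: Hypotheses are partitioned into $K$ classes. For class $k$, $\mathbf R_k$ is the set of hypotheses in class $k$ rejected by the procedure and $\mathbf T^k_0$ the set of true nulls in class $k$; $V_k=|\mathbf R_k\cap\mathbf T^k_0|$, $R_k=|\mathbf R_k|$, $V=\sum_kV_k$, $R=\sum_kR_k$. *)

theory Defs
  imports "HOL-Probability.Probability"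
begin

text \<open>BH_kstar = max{k in {0..m}. #{j < m. p j <= alpha k / m} >= k}
(equivalently the largest k with p_(k) <= alpha k / m; 0 if none).\<close>

definition BH_kstar :: "real \<Rightarrow> nat \<Rightarrow> (nat \<Rightarrow> real) \<Rightarrow> nat" where
  "BH_kstar \<alpha> m p =
     Max {k \<in> {0..m}. card {j \<in> {..<m}. p j \<le> \<alpha> * real k / real m} \<ge> k}"

definition BH_rej :: "real \<Rightarrow> nat \<Rightarrow> (nat \<Rightarrow> real) \<Rightarrow> nat set" where
  "BH_rej \<alpha> m p =
     (if BH_kstar \<alpha> m p = 0 then {}
      else {i \<in> {..<m}. p i \<le> \<alpha> * real (BH_kstar \<alpha> m p) / real m})"

end

theory Submission
  imports Defs
begin

definition Ccnt :: "real \<Rightarrow> nat \<Rightarrow> (nat \<Rightarrow> real) \<Rightarrow> nat \<Rightarrow> nat" where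
  "Ccnt \<alpha> m q k = card {j \<in> {..<m}. q j \<le> \<alpha> * real k / real m}"

lemma kstar_props:
  shows "BH_kstar \<alpha> m q \<le> m" "BH_kstar \<alpha> m q \<le> Ccnt \<alpha> m q (BH_kstar \<alpha> m q)"
    "\<And>k. k \<le> m \<Longrightarrow> k \<le> Ccnt \<alpha> m q k \<Longrightarrow> k \<le> BH_kstar \<alpha> m q"
proof -
  let ?S = "{k \<in> {0..m}. card {j \<in> {..<m}. q j \<le> \<alpha> * real k / real m} \<ge> k}"
  have fin: "finite ?S" by auto
  have ne: "0 \<in> ?S" by auto
  have "BH_kstar \<alpha> m q \<in> ?S" unfolding BH_kstar_def
    by (rule Max_in[OF fin]) (use ne in blast)
  then show "BH_kstar \<alpha> m q \<le> m" "BH_kstar \<alpha> m q \<le> Ccnt \<alpha> m q (BH_kstar \<alpha> m q)"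
    by (auto simp: Ccnt_def)
  fix k assume "k \<le> m" "k \<le> Ccnt \<alpha> m q k"
  then have kS: "k \<in> ?S" by (auto simp: Ccnt_def)
  show "k \<le> BH_kstar \<alpha> m q" unfolding BH_kstar_def by (rule Max_ge[OF fin kS])
qed

lemma kstar_eq:
  "BH_kstar \<alpha> m q = k \<longleftrightarrow> k \<le> m \<and> k \<le> Ccnt \<alpha> m q k \<and>
     (\<forall>k'\<in>{k<..m}. \<not> k' \<le> Ccnt \<alpha> m q k')"
proof
  assume "BH_kstar \<alpha> m q = k"
  then show "k \<le> m \<and> k \<le> Ccnt \<alpha> m q k \<and> (\<forall>k'\<in>{k<..m}. \<not> k' \<le> Ccnt \<alpha> m q k')"
    using kstar_props(1,2)[of \<alpha> m q] kstar_props(3)[where \<alpha>=\<alpha> and m=m and q=q] by fastforce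
next
  assume h: "k \<le> m \<and> k \<le> Ccnt \<alpha> m q k \<and> (\<forall>k'\<in>{k<..m}. \<not> k' \<le> Ccnt \<alpha> m q k')"
  then have "k \<le> BH_kstar \<alpha> m q" using kstar_props(3) by blast
  moreover have "\<not> k < BH_kstar \<alpha> m q"
    using h kstar_props(1,2)[of \<alpha> m q] by force
  ultimately show "BH_kstar \<alpha> m q = k" by simp
qed

lemma mem_BH_rej:
  "i \<in> BH_rej \<alpha> m q \<longleftrightarrow> i < m \<and> (\<exists>k\<in>{1..m}. BH_kstar \<alpha> m q = k \<and> q i \<le> \<alpha> * real k / real m)"
  using kstar_props(1)[of \<alpha> m q] by (auto simp: BH_rej_def)

lemma BH_rej_sub: "BH_rej \<alpha> m q \<subseteq> {..<m}"
  by (auto simp: BH_rej_def)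

lemma Ccnt_real: "real (Ccnt \<alpha> m q k) = (\<Sum>j<m. if q j \<le> \<alpha> * real k / real m then 1 else 0)"
  unfolding Ccnt_def by (simp add: sum.If_cases Int_def conj_commute)

lemma card_rej_sum:
  "real (card (BH_rej \<alpha> m q \<inter> A)) = (\<Sum>i\<in>{..<m} \<inter> A. if i \<in> BH_rej \<alpha> m q then 1 else 0)"
proof -
  have "BH_rej \<alpha> m q \<inter> A = ({..<m} \<inter> A) \<inter> {i. i \<in> BH_rej \<alpha> m q}"
    using BH_rej_sub by blast
  then show ?thesis by (simp add: sum.If_cases)
qed

context
  fixes M :: "'w measure" and p :: "'w \<Rightarrow> nat \<Rightarrow> real" and m :: nat and \<alpha> :: real
  assumes meas: "\<And>i. i < m \<Longrightarrow> (\<lambda>\<omega>. p \<omega> i) \<in> borel_measurable M"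
begin

lemma Ccnt_meas: "(\<lambda>\<omega>. real (Ccnt \<alpha> m (p \<omega>) k)) \<in> borel_measurable M"
  unfolding Ccnt_real
  by (intro borel_measurable_sum measurable_If borel_measurable_le meas measurable_const) auto

lemma Ccnt_pred: "{\<omega> \<in> space M. k \<le> Ccnt \<alpha> m (p \<omega>) k} \<in> sets M"
proof -
  have "{\<omega> \<in> space M. k \<le> Ccnt \<alpha> m (p \<omega>) k} = {\<omega> \<in> space M. real k \<le> real (Ccnt \<alpha> m (p \<omega>) k)}"
    by simp
  also have "\<dots> \<in> sets M" by (intro borel_measurable_le Ccnt_meas measurable_const) simp
  finally show ?thesis .
qed

lemma kstar_sets: "{\<omega> \<in> space M. BH_kstar \<alpha> m (p \<omega>) = k} \<in> sets M"
proof -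
  have "{\<omega> \<in> space M. BH_kstar \<alpha> m (p \<omega>) = k} =
     {\<omega> \<in> space M. k \<le> m} \<inter> {\<omega> \<in> space M. k \<le> Ccnt \<alpha> m (p \<omega>) k} \<inter>
     (space M - (\<Union>k'\<in>{k<..m}. {\<omega> \<in> space M. k' \<le> Ccnt \<alpha> m (p \<omega>) k'}))"
    unfolding kstar_eq by auto
  also have "\<dots> \<in> sets M"
    by (intro sets.Int sets.finite_UN sets.Diff Ccnt_pred) auto
  finally show ?thesis .
qed

lemma rej_sets: "{\<omega> \<in> space M. i \<in> BH_rej \<alpha> m (p \<omega>)} \<in> sets M"
proof (cases "i < m")
  case True
  have "{\<omega> \<in> space M. i \<in> BH_rej \<alpha> m (p \<omega>)} =
    (\<Union>k\<in>{1..m}. {\<omega> \<in> space M. BH_kstar \<alpha> m (p \<omega>) = k} \<inter> {\<omega> \<in> space M. p \<omega> i \<le> \<alpha> * real k / real m})"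
    unfolding mem_BH_rej using True by auto
  also have "\<dots> \<in> sets M"
    by (intro sets.finite_UN sets.Int kstar_sets borel_measurable_le meas True measurable_const) auto
  finally show ?thesis .
next
  case False
  then show ?thesis unfolding mem_BH_rej by simp
qed

lemma card_meas: "(\<lambda>\<omega>. real (card (BH_rej \<alpha> m (p \<omega>) \<inter> A))) \<in> borel_measurable M"
  unfolding card_rej_sum
  by (intro borel_measurable_sum measurable_If rej_sets measurable_const) auto

end

theorem corollary6:
  fixes M :: "'w measure" and p :: "'w \<Rightarrow> nat \<Rightarrow> real"
    and m K :: nat and \<alpha> :: real
    and T0 :: "nat set" and cls :: "nat \<Rightarrow> nat"
  assumes "prob_space M"
    and "m \<ge> 1" and "0 < \<alpha>" and "\<alpha> < 1"
    and "\<And>i. i < m \<Longrightarrow> (\<lambda>\<omega>. p \<omega> i) \<in> borel_measurable M"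
    and "T0 \<subseteq> {..<m}"
    and "\<And>i. i < m \<Longrightarrow> cls i \<in> {1..K}"
    and global_FDR:
      "prob_space.expectation M
         (\<lambda>\<omega>. real (card (BH_rej \<alpha> m (p \<omega>) \<inter> T0))
               / max 1 (real (card (BH_rej \<alpha> m (p \<omega>))))) \<le> \<alpha>"
  shows "prob_space.expectation M
         (\<lambda>\<omega>. (\<Sum>k=1..K. real (card (BH_rej \<alpha> m (p \<omega>) \<inter> T0 \<inter> {i. cls i = k})))
               / (\<Sum>k=1..K. max 1 (real (card (BH_rej \<alpha> m (p \<omega>) \<inter> {i. cls i = k})))))
         \<le> \<alpha>"
proof -
  interpret prob_space M by fact
  have K1: "K \<ge> 1" using assms(2) assms(7)[of 0] by auto
  have pw: "(\<Sum>k=1..K. real (card (R \<inter> T0 \<inter> {i. cls i = k})))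
               / (\<Sum>k=1..K. max 1 (real (card (R \<inter> {i. cls i = k}))))
         \<le> real (card (R \<inter> T0)) / max 1 (real (card R))" if R: "R \<subseteq> {..<m}" for R
  proof -
    have img: "cls ` S \<subseteq> {1..K}" if "S \<subseteq> {..<m}" for S
      using that assms(7) by auto
    have grp: "(\<Sum>k=1..K. real (card (S \<inter> {i. cls i = k}))) = real (card S)"
      if "S \<subseteq> {..<m}" for S
    proof -
      have fS: "finite S" using that finite_subset by blast
      have "(\<Sum>k=1..K. real (card (S \<inter> {i. cls i = k}))) = (\<Sum>k=1..K. \<Sum>x\<in>{x. x \<in> S \<and> cls x = k}. 1)"
        by (intro sum.cong) (auto simp: Int_def)
      also have "\<dots> = (\<Sum>x\<in>S. 1)"
        by (rule sum.group[OF fS _ img[OF that]]) simp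
      finally show ?thesis by simp
    qed
    have num: "(\<Sum>k=1..K. real (card (R \<inter> T0 \<inter> {i. cls i = k}))) = real (card (R \<inter> T0))"
      using grp[of "R \<inter> T0"] R by auto
    have d1: "(\<Sum>k=1..K. max 1 (real (card (R \<inter> {i. cls i = k})))) \<ge> real (card R)"
      using grp[OF R] by (metis (no_types, lifting) max.cobounded2 sum_mono)
    have d2: "(\<Sum>k=1..K. max 1 (real (card (R \<inter> {i. cls i = k})))) \<ge> (\<Sum>k=1..K. 1)"
      by (intro sum_mono) simp
    with K1 have "(\<Sum>k=1..K. max 1 (real (card (R \<inter> {i. cls i = k})))) \<ge> 1" by simp
    with d1 have "(\<Sum>k=1..K. max 1 (real (card (R \<inter> {i. cls i = k})))) \<ge> max 1 (real (card R))"
      by simp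
    then show ?thesis unfolding num
      by (intro divide_left_mono) auto
  qed
  have m1: "(\<lambda>\<omega>. real (card (BH_rej \<alpha> m (p \<omega>) \<inter> A))) \<in> borel_measurable M" for A
    by (rule card_meas) (rule assms(5))
  have m2: "(\<lambda>\<omega>. real (card (BH_rej \<alpha> m (p \<omega>)))) \<in> borel_measurable M"
    using m1[of UNIV] by simp
  have m3: "(\<lambda>\<omega>. real (card (BH_rej \<alpha> m (p \<omega>) \<inter> T0 \<inter> S))) \<in> borel_measurable M" for S
    using m1[of "T0 \<inter> S"] by (simp add: Int_assoc)
  define fn where "fn = (\<lambda>\<omega>. (\<Sum>k=1..K. real (card (BH_rej \<alpha> m (p \<omega>) \<inter> T0 \<inter> {i. cls i = k})))
               / (\<Sum>k=1..K. max 1 (real (card (BH_rej \<alpha> m (p \<omega>) \<inter> {i. cls i = k})))))"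
  define fo where "fo = (\<lambda>\<omega>. real (card (BH_rej \<alpha> m (p \<omega>) \<inter> T0))
               / max 1 (real (card (BH_rej \<alpha> m (p \<omega>)))))"
  have fn_fo: "fn x \<le> fo x" for x
    unfolding fn_def fo_def by (rule pw[OF BH_rej_sub])
  have fo1: "fo x \<le> 1" for x
  proof -
    let ?R = "BH_rej \<alpha> m (p x)"
    have "finite ?R" by (rule finite_subset[OF BH_rej_sub]) simp
    then have "card (?R \<inter> T0) \<le> card ?R" by (rule card_mono) blast
    then have "real (card (?R \<inter> T0)) \<le> max 1 (real (card ?R))" by simp
    then show ?thesis unfolding fo_def by (simp add: divide_le_eq_1 less_max_iff_disj)
  qed
  have fo0: "0 \<le> fo x" for x
    unfolding fo_def by (intro divide_nonneg_nonneg) auto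
  have fn0: "0 \<le> fn x" for x
    unfolding fn_def by (intro divide_nonneg_nonneg sum_nonneg) auto
  have mfn: "fn \<in> borel_measurable M"
    unfolding fn_def
    by (intro borel_measurable_divide borel_measurable_sum borel_measurable_max m1 m3 borel_measurable_const)
  have mfo: "fo \<in> borel_measurable M"
    unfolding fo_def
    by (intro borel_measurable_divide borel_measurable_max m1 m2 borel_measurable_const)
  have int1: "integrable M fn"
    by (rule integrable_const_bound[where B=1]) (use mfn fn_fo fo1 fn0 in \<open>auto intro: order_trans\<close>)
  have int2: "integrable M fo"
    by (rule integrable_const_bound[where B=1]) (use mfo fo1 fo0 in auto)
  have "expectation fn \<le> expectation fo"
    by (intro integral_mono int1 int2 fn_fo)
  with global_FDR show ?thesis unfolding fn_def fo_def by linarith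
qed

end
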